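(* Let $\mathscr{H}$ be a finite-dimensional complex Hilbert space and let $A=\{a_k\}_{k=1}^{m}$ and $B=\{b_j\}_{j=1}^{n}$ be frames of $\mathscr{H}$, where $A$ has lower and upper frame bounds $\alpha_1,\alpha_2$ and $B$ has lower and upper frame bounds $\beta_1,\beta_2$. Let $S\subseteq\{1,\dots,m\}$ and $T\subseteq\{1,\dots,n\}$ satisfy $$|S|\,|T|\,M(A^*,B)^2<\frac{\beta_1}{\alpha_2}.$$ Then for every $x\in\mathscr{H}$, $$C(S,T)\,\|x\|\le\Big(\sum_{k\in S^c}|\langle x,a_k\rangle|^2\Big)^{1/2}+\Big(\sum_{j\in T^c}|\langle x,b_j\rangle|^2\Big)^{1/2},$$ where $$C(S,T)=\Big(1-\Big(\tfrac{\alpha_2}{\beta_1}\Big)^{1/2}M(A^*,B)\,|S|^{1/2}|T|^{1/2}\Big)\Big(\max\Big\{\beta_1^{-1/2},\ \Big(1+\Big(\tfrac{\beta_2}{\beta_1}\Big)^{1/2}\Big)\alpha_1^{-1/2}\,m\,M(A^*,A)\Big\}\Big)^{-1}.$$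
   Context: A finite family $\{a_k\}_{k=1}^m$ is a frame of $\mathscr{H}$ with lower and upper frame bounds $0<\alpha_1\le\alpha_2$ if $\alpha_1\|x\|^2\le\sum_k|\langle x,a_k\rangle|^2\le\alpha_2\|x\|^2$ for all $x$. The canonical dual frame of $A$ is $A^*=\{a_k^*\}_{k=1}^m$ with $a_k^*=F^{-1}a_k$, where $F x=\sum_k\langle x,a_k\rangle a_k$ is the frame operator of $A$. For two families $U=\{u_k\}$, $V=\{v_j\}$, the coherence is $M(U,V)=\max_{k,j}|\langle u_k,v_j\rangle|$. $S^c$ and $T^c$ are the complements in $\{1,\dots,m\}$ and $\{1,\dots,n\}$. *)

theory Defs
  imports "HOL-Analysis.Analysis"
begin

text \<open>A finite-dimensional complex Hilbert space is modelled as \<open>complex ^ 'n\<close> with the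
standard inner product, linear in the first argument.\<close>

definition cinner :: "complex ^ 'n \<Rightarrow> complex ^ 'n \<Rightarrow> complex" where
  "cinner x y = (\<Sum>i\<in>UNIV. x $ i * cnj (y $ i))"

definition is_frame :: "(nat \<Rightarrow> complex ^ 'n) \<Rightarrow> nat \<Rightarrow> real \<Rightarrow> real \<Rightarrow> bool" where
  "is_frame a m lo up \<longleftrightarrow> 0 < lo \<and> lo \<le> up \<and>
     (\<forall>x. lo * (norm x)\<^sup>2 \<le> (\<Sum>k=1..m. (cmod (cinner x (a k)))\<^sup>2) \<and>
          (\<Sum>k=1..m. (cmod (cinner x (a k)))\<^sup>2) \<le> up * (norm x)\<^sup>2)"

definition frame_op :: "(nat \<Rightarrow> complex ^ 'n) \<Rightarrow> nat \<Rightarrow> complex ^ 'n \<Rightarrow> complex ^ 'n" where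
  "frame_op a m x = (\<Sum>k=1..m. cinner x (a k) *s a k)"

definition dual_frame :: "(nat \<Rightarrow> complex ^ 'n) \<Rightarrow> nat \<Rightarrow> nat \<Rightarrow> complex ^ 'n" where
  "dual_frame a m k = inv (frame_op a m) (a k)"

definition coherence :: "(nat \<Rightarrow> complex ^ 'n) \<Rightarrow> nat \<Rightarrow> (nat \<Rightarrow> complex ^ 'n) \<Rightarrow> nat \<Rightarrow> real" where
  "coherence u m v n = Max ((\<lambda>(k, j). cmod (cinner (u k) (v j))) ` ({1..m} \<times> {1..n}))"


end

theory Submission
  imports Defs
begin


lemma cinner_add_left: "cinner (x + y) z = cinner x z + cinner y z"
  unfolding cinner_def by (simp add: distrib_right sum.distrib)

lemma cinner_smult_left: "cinner (c *s x) z = c * cinner x z"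
  unfolding cinner_def by (simp add: sum_distrib_left mult.assoc)

lemma cinner_zero_left [simp]: "cinner 0 z = 0"
  unfolding cinner_def by simp

lemma cinner_sum_left: "cinner (\<Sum>k\<in>K. f k) z = (\<Sum>k\<in>K. cinner (f k) z)"
  unfolding cinner_def by (simp add: sum_distrib_right sum.swap[of _ UNIV K])

lemma cinner_cnj: "cinner y x = cnj (cinner x y)"
  unfolding cinner_def by (simp add: mult.commute)

lemma frame_op_comp: "frame_op a m x $ i = (\<Sum>k=1..m. cinner x (a k) * a k $ i)"
  unfolding frame_op_def by simp

lemma frame_op_lin:
  "frame_op a m (\<Sum>k\<in>K. c k *s y k) = (\<Sum>k\<in>K. c k *s frame_op a m (y k))"
  unfolding vec_eq_iff
  by (simp add: frame_op_comp cinner_sum_left cinner_smult_left sum_distrib_left sum_distrib_right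
      sum.swap[of _ K] mult.assoc)

lemma frame_op_real_linear: "linear (frame_op a m)"
proof (rule linearI)
  fix x y show "frame_op a m (x + y) = frame_op a m x + frame_op a m y"
    unfolding vec_eq_iff by (simp add: frame_op_comp cinner_add_left distrib_right sum.distrib)
next
  fix r :: real and x show "frame_op a m (r *\<^sub>R x) = r *\<^sub>R frame_op a m x"
  proof -
    have eq: "\<And>y::complex^'n. r *\<^sub>R y = complex_of_real r *s y"
      by (simp add: vec_eq_iff scaleR_conv_of_real[where 'a=complex])
    show ?thesis unfolding eq vec_eq_iff
      by (simp add: frame_op_comp cinner_smult_left scaleR_conv_of_real sum_distrib_left mult.assoc)
  qed
qed

lemma cinner_frame_op: "cinner (frame_op a m x) x = of_real (\<Sum>k=1..m. (cmod (cinner x (a k)))\<^sup>2)"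
  unfolding frame_op_def
  by (simp add: cinner_sum_left cinner_smult_left cinner_cnj[of "a _" x] complex_norm_square[symmetric])

lemma frame_inj:
  assumes fr: "is_frame a m lo up"
  shows "inj (frame_op a m)"
proof -
  have "x = 0" if h: "frame_op a m x = 0" for x
  proof -
    have "of_real (\<Sum>k=1..m. (cmod (cinner x (a k)))\<^sup>2) = (0::complex)"
      using cinner_frame_op[of a m x] h by simp
    then have s0: "(\<Sum>k=1..m. (cmod (cinner x (a k)))\<^sup>2) = 0" by (rule of_real_eq_0_iff[THEN iffD1])
    have "lo * (norm x)\<^sup>2 \<le> 0" using fr s0 unfolding is_frame_def by metis
    moreover have "lo > 0" using fr unfolding is_frame_def by simp
    ultimately have "(norm x)\<^sup>2 \<le> 0"
      by (simp add: mult_le_0_iff)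
    then show ?thesis by simp
  qed
  then show ?thesis using linear_injective_0[OF frame_op_real_linear] by blast
qed

lemma frame_surj:
  assumes fr: "is_frame a m lo up"
  shows "surj (frame_op a m)"
  using linear_injective_imp_surjective[OF frame_op_real_linear frame_inj[OF fr]] by simp

lemma frame_op_dual:
  assumes fr: "is_frame a m lo up"
  shows "frame_op a m (dual_frame a m k) = a k"
  unfolding dual_frame_def using frame_surj[OF fr] by (simp add: surj_f_inv_f)

lemma frame_op_dual_sum:
  assumes fr: "is_frame a m lo up"
  shows "frame_op a m (\<Sum>k\<in>K. c k *s dual_frame a m k) = (\<Sum>k\<in>K. c k *s a k)"
  by (simp add: frame_op_lin frame_op_dual[OF fr])

lemma reconstruct:
  assumes fr: "is_frame a m lo up"
  shows "x = (\<Sum>k=1..m. cinner x (a k) *s dual_frame a m k)"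
proof -
  have "frame_op a m (\<Sum>k=1..m. cinner x (a k) *s dual_frame a m k) = (\<Sum>k=1..m. cinner x (a k) *s a k)"
    by (rule frame_op_dual_sum[OF fr])
  also have "\<dots> = frame_op a m x" by (simp add: frame_op_def)
  finally have "frame_op a m x = frame_op a m (\<Sum>k=1..m. cinner x (a k) *s dual_frame a m k)" ..
  then show ?thesis using frame_inj[OF fr] by (simp add: inj_eq)
qed

lemma coherence_ge:
  assumes "k \<in> {1..m}" "j \<in> {1..n}"
  shows "cmod (cinner (u k) (v j)) \<le> coherence u m v n"
  unfolding coherence_def
  by (rule Max_ge) (use assms in auto)

lemma trace_bound:
  fixes a :: "nat \<Rightarrow> complex ^ 'n"
  assumes fr: "is_frame a m lo up"
  shows "1 \<le> real m * coherence (dual_frame a m) m a m"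
proof -
  let ?d = "dual_frame a m"
  have one: "1 = (\<Sum>k=1..m. cnj (a k $ i) * ?d k $ i)" for i
  proof -
    have "axis i (1::complex) $ i = (\<Sum>k=1..m. cinner (axis i 1) (a k) *s ?d k) $ i"
      using reconstruct[OF fr, of "axis i 1"] by simp
    moreover have "cinner (axis i 1) (a k) = cnj (a k $ i)" for k
      unfolding cinner_def axis_def by (simp add: if_distrib[where f="\<lambda>t. t * _"] cong: if_cong)
    ultimately show ?thesis by simp
  qed
  have "(of_nat CARD('n)::complex) = (\<Sum>i\<in>(UNIV::'n set). 1)" by simp
  also have "\<dots> = (\<Sum>i\<in>UNIV. \<Sum>k=1..m. cnj (a k $ i) * ?d k $ i)"
    by (rule sum.cong[OF refl]) (rule one)
  also have "\<dots> = (\<Sum>k=1..m. cinner (?d k) (a k))"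
    unfolding cinner_def by (subst sum.swap) (simp add: mult.commute)
  finally have eq: "(of_nat CARD('n)::complex) = (\<Sum>k=1..m. cinner (?d k) (a k))" .
  have "1 \<le> real CARD('n)" by simp
  also have "real CARD('n) = cmod (\<Sum>k=1..m. cinner (?d k) (a k))"
    using arg_cong[OF eq, of cmod] by simp
  also have "\<dots> \<le> (\<Sum>k=1..m. cmod (cinner (?d k) (a k)))" by (rule norm_sum)
  also have "\<dots> \<le> (\<Sum>k=1..m. coherence ?d m a m)"
    by (rule sum_mono) (rule coherence_ge; simp)
  also have "\<dots> = real m * coherence ?d m a m" by simp
  finally show ?thesis .
qed

lemma L2_sub:
  assumes "K \<subseteq> L" "finite L"
  shows "L2_set f K \<le> L2_set f L"
  unfolding L2_set_def
  by (rule real_sqrt_le_mono, rule sum_mono2) (use assms in auto)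

lemma z_bound:
  fixes a :: "nat \<Rightarrow> complex ^ 'n"
  assumes fr: "is_frame a m lo up" and K: "K \<subseteq> {1..m}"
  shows "sqrt lo * norm (\<Sum>k\<in>K. cinner x (a k) *s dual_frame a m k)
           \<le> L2_set (\<lambda>k. cmod (cinner x (a k))) K"
proof -
  define z where "z = (\<Sum>k\<in>K. cinner x (a k) *s dual_frame a m k)"
  define R where "R = (\<Sum>k=1..m. (cmod (cinner z (a k)))\<^sup>2)"
  define P where "P = L2_set (\<lambda>k. cmod (cinner x (a k))) K"
  have R0: "0 \<le> R" unfolding R_def by (simp add: sum_nonneg)
  have P0: "0 \<le> P" unfolding P_def by simp
  have "complex_of_real R = cinner (frame_op a m z) z"
    unfolding R_def cinner_frame_op ..
  also have "\<dots> = (\<Sum>k\<in>K. cinner x (a k) * cinner (a k) z)"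
    unfolding z_def frame_op_dual_sum[OF fr] cinner_sum_left cinner_smult_left ..
  finally have Req: "complex_of_real R = (\<Sum>k\<in>K. cinner x (a k) * cinner (a k) z)" .
  have "R = cmod (complex_of_real R)" using R0 by simp
  also have "\<dots> \<le> (\<Sum>k\<in>K. cmod (cinner x (a k) * cinner (a k) z))"
    unfolding Req by (rule norm_sum)
  also have "\<dots> = (\<Sum>k\<in>K. \<bar>cmod (cinner x (a k))\<bar> * \<bar>cmod (cinner z (a k))\<bar>)"
    by (simp add: norm_mult cinner_cnj[of "a _" z])
  also have "\<dots> \<le> P * L2_set (\<lambda>k. cmod (cinner z (a k))) K"
    unfolding P_def by (rule L2_set_mult_ineq)
  also have "\<dots> \<le> P * sqrt R"
  proof (rule mult_left_mono[OF _ P0])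
    have "L2_set (\<lambda>k. cmod (cinner z (a k))) K \<le> L2_set (\<lambda>k. cmod (cinner z (a k))) {1..m}"
      by (rule L2_sub[OF K]) simp
    then show "L2_set (\<lambda>k. cmod (cinner z (a k))) K \<le> sqrt R"
      unfolding R_def L2_set_def .
  qed
  finally have RP: "R \<le> P * sqrt R" .
  have sRP: "sqrt R \<le> P"
  proof (cases "R = 0")
    case True then show ?thesis using P0 by simp
  next
    case False
    then have "sqrt R > 0" using R0 by simp
    moreover have "sqrt R * sqrt R = R" using R0 by simp
    then have "sqrt R * sqrt R \<le> P * sqrt R" using RP by linarith
    ultimately show ?thesis by (metis mult_le_cancel_right_pos)
  qed
  have "lo * (norm z)\<^sup>2 \<le> R" using fr unfolding is_frame_def R_def by blast
  then have "sqrt (lo * (norm z)\<^sup>2) \<le> sqrt R" by (rule real_sqrt_le_mono)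
  moreover have "sqrt (lo * (norm z)\<^sup>2) = sqrt lo * norm z" by (simp add: real_sqrt_mult)
  ultimately show ?thesis using sRP unfolding z_def P_def by linarith
qed

lemma key:
  fixes a b :: "nat \<Rightarrow> complex ^ 'n"
  assumes frA: "is_frame a m \<alpha>1 \<alpha>2" and frB: "is_frame b n \<beta>1 \<beta>2"
    and S_sub: "S \<subseteq> {1..m}" and T_sub: "T \<subseteq> {1..n}"
  shows "sqrt \<beta>1 * norm x \<le> sqrt \<alpha>2 * coherence (dual_frame a m) m b n * sqrt (real (card S)) * sqrt (real (card T)) * norm x
     + sqrt \<beta>2 / sqrt \<alpha>1 * sqrt (\<Sum>k\<in>{1..m} - S. (cmod (cinner x (a k)))\<^sup>2)
     + sqrt (\<Sum>j\<in>{1..n} - T. (cmod (cinner x (b j)))\<^sup>2)"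
proof -
  define M where "M = coherence (dual_frame a m) m b n"
  define c where "c k = cinner x (a k)" for k
  define d where "d = dual_frame a m"
  define z where "z = (\<Sum>k\<in>{1..m} - S. c k *s d k)"
  define s where "s j = (\<Sum>k\<in>S. c k * cinner (d k) (b j))" for j
  define p where "p = sqrt (\<Sum>k\<in>{1..m} - S. (cmod (cinner x (a k)))\<^sup>2)"
  define q where "q = sqrt (\<Sum>j\<in>{1..n} - T. (cmod (cinner x (b j)))\<^sup>2)"
  have a1: "\<alpha>1 > 0" and a2: "\<alpha>2 \<ge> 0" using frA unfolding is_frame_def by auto
  have b1: "\<beta>1 > 0" and b2: "\<beta>2 \<ge> 0" using frB unfolding is_frame_def by auto
  have hx: "cinner x (b j) = s j + cinner z (b j)" for j
  proof -
    have "cinner x (b j) = cinner (\<Sum>k=1..m. c k *s d k) (b j)"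
      using arg_cong[OF reconstruct[OF frA, of x], of "\<lambda>y. cinner y (b j)"] unfolding c_def d_def .
    also have "\<dots> = (\<Sum>k=1..m. c k * cinner (d k) (b j))"
      by (simp add: cinner_sum_left cinner_smult_left)
    also have "\<dots> = (\<Sum>k\<in>{1..m} - S. c k * cinner (d k) (b j)) + s j"
      unfolding s_def by (rule sum.subset_diff[OF S_sub]) simp
    also have "(\<Sum>k\<in>{1..m} - S. c k * cinner (d k) (b j)) = cinner z (b j)"
      unfolding z_def by (simp add: cinner_sum_left cinner_smult_left)
    finally show ?thesis by simp
  qed
  have QT: "L2_set (\<lambda>j. cmod (cinner x (b j))) T
      \<le> L2_set (\<lambda>j. cmod (s j)) T + L2_set (\<lambda>j. cmod (cinner z (b j))) T"
  proof -
    have "L2_set (\<lambda>j. cmod (cinner x (b j))) T \<le> L2_set (\<lambda>j. cmod (s j) + cmod (cinner z (b j))) T"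
      by (rule L2_set_mono) (simp_all add: hx norm_triangle_ineq)
    also have "\<dots> \<le> L2_set (\<lambda>j. cmod (s j)) T + L2_set (\<lambda>j. cmod (cinner z (b j))) T"
      by (rule L2_set_triangle_ineq)
    finally show ?thesis .
  qed
  have Lc: "L2_set (\<lambda>k. cmod (c k)) S \<le> sqrt \<alpha>2 * norm x"
  proof -
    have "L2_set (\<lambda>k. cmod (c k)) S \<le> L2_set (\<lambda>k. cmod (c k)) {1..m}"
      by (rule L2_sub[OF S_sub]) simp
    also have "\<dots> \<le> sqrt (\<alpha>2 * (norm x)\<^sup>2)"
      unfolding L2_set_def c_def using frA unfolding is_frame_def
      by (intro real_sqrt_le_mono) blast
    also have "\<dots> = sqrt \<alpha>2 * norm x" by (simp add: real_sqrt_mult)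
    finally show ?thesis .
  qed
  have Ls: "L2_set (\<lambda>j. cmod (s j)) T \<le> sqrt \<alpha>2 * M * sqrt (real (card S)) * sqrt (real (card T)) * norm x"
  proof (cases "S = {} \<or> T = {}")
    case True
    then have "L2_set (\<lambda>j. cmod (s j)) T = 0" unfolding s_def by (auto simp: L2_set_constant)
    moreover have "sqrt \<alpha>2 * M * sqrt (real (card S)) * sqrt (real (card T)) * norm x = 0"
      using True by auto
    ultimately show ?thesis by linarith
  next
    case False
    then obtain k0 j0 where k0: "k0 \<in> S" and j0: "j0 \<in> T" by auto
    have M0: "0 \<le> M"
      unfolding M_def using coherence_ge[of k0 m j0 n "dual_frame a m" b] k0 j0 S_sub T_sub
      by (meson norm_ge_zero order_trans subsetD)
    have finS: "finite S" using S_sub finite_subset by blast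
    have sj: "cmod (s j) \<le> M * (sqrt (real (card S)) * (sqrt \<alpha>2 * norm x))" if j: "j \<in> T" for j
    proof -
      have "cmod (s j) \<le> (\<Sum>k\<in>S. cmod (c k * cinner (d k) (b j)))"
        unfolding s_def by (rule norm_sum)
      also have "\<dots> \<le> (\<Sum>k\<in>S. cmod (c k) * M)"
      proof (rule sum_mono)
        fix k assume k: "k \<in> S"
        have "cmod (cinner (d k) (b j)) \<le> M"
          unfolding M_def d_def using coherence_ge k j S_sub T_sub by blast
        then show "cmod (c k * cinner (d k) (b j)) \<le> cmod (c k) * M"
          by (simp add: norm_mult mult_left_mono)
      qed
      also have "\<dots> = M * (\<Sum>k\<in>S. \<bar>cmod (c k)\<bar> * \<bar>1\<bar>)"
        by (simp add: sum_distrib_left mult.commute)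
      also have "\<dots> \<le> M * (L2_set (\<lambda>k. cmod (c k)) S * L2_set (\<lambda>k. 1) S)"
        by (rule mult_left_mono[OF L2_set_mult_ineq M0])
      also have "\<dots> \<le> M * (sqrt (real (card S)) * (sqrt \<alpha>2 * norm x))"
        using Lc M0 by (simp add: L2_set_constant mult_left_mono mult.commute)
      finally show ?thesis .
    qed
    have "L2_set (\<lambda>j. cmod (s j)) T \<le> L2_set (\<lambda>j. M * (sqrt (real (card S)) * (sqrt \<alpha>2 * norm x))) T"
      by (rule L2_set_mono) (simp_all add: sj)
    also have "\<dots> = sqrt (real (card T)) * \<bar>M * (sqrt (real (card S)) * (sqrt \<alpha>2 * norm x))\<bar>"
      by (rule L2_set_constant)
    also have "\<dots> = sqrt \<alpha>2 * M * sqrt (real (card S)) * sqrt (real (card T)) * norm x"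
      using M0 a2 by (simp add: abs_mult)
    finally show ?thesis .
  qed
  have Lz: "L2_set (\<lambda>j. cmod (cinner z (b j))) T \<le> sqrt \<beta>2 / sqrt \<alpha>1 * p"
  proof -
    have "L2_set (\<lambda>j. cmod (cinner z (b j))) T \<le> L2_set (\<lambda>j. cmod (cinner z (b j))) {1..n}"
      by (rule L2_sub[OF T_sub]) simp
    also have "\<dots> \<le> sqrt (\<beta>2 * (norm z)\<^sup>2)"
      unfolding L2_set_def using frB unfolding is_frame_def
      by (intro real_sqrt_le_mono) blast
    also have "\<dots> = sqrt \<beta>2 * norm z" by (simp add: real_sqrt_mult)
    also have "\<dots> \<le> sqrt \<beta>2 / sqrt \<alpha>1 * p"
    proof -
      have "sqrt \<alpha>1 * norm z \<le> p"
        using z_bound[OF frA, of "{1..m} - S" x] unfolding z_def c_def d_def p_def L2_set_def by auto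
      then have "norm z \<le> p / sqrt \<alpha>1" using a1 by (simp add: field_simps)
      then have "sqrt \<beta>2 * norm z \<le> sqrt \<beta>2 * (p / sqrt \<alpha>1)" using b2 by (intro mult_left_mono) simp_all
      then show ?thesis by simp
    qed
    finally show ?thesis .
  qed
  have "sqrt \<beta>1 * norm x = sqrt (\<beta>1 * (norm x)\<^sup>2)" by (simp add: real_sqrt_mult)
  also have "\<dots> \<le> sqrt (\<Sum>j=1..n. (cmod (cinner x (b j)))\<^sup>2)"
    using frB unfolding is_frame_def by (intro real_sqrt_le_mono) blast
  also have "(\<Sum>j=1..n. (cmod (cinner x (b j)))\<^sup>2)
      = (\<Sum>j\<in>{1..n} - T. (cmod (cinner x (b j)))\<^sup>2) + (\<Sum>j\<in>T. (cmod (cinner x (b j)))\<^sup>2)"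
    by (rule sum.subset_diff[OF T_sub]) simp
  also have "sqrt \<dots> \<le> q + L2_set (\<lambda>j. cmod (cinner x (b j))) T"
    unfolding q_def L2_set_def by (rule sqrt_add_le_add_sqrt) (simp_all add: sum_nonneg)
  finally have "sqrt \<beta>1 * norm x \<le> q + L2_set (\<lambda>j. cmod (cinner x (b j))) T" .
  with QT Ls Lz show ?thesis unfolding M_def p_def q_def by linarith
qed

lemma final_real:
  fixes sb1 sa1 sa2 sb2 r M ss st nx p q rm MAA :: real
  assumes sb1: "sb1 > 0" and sa1: "sa1 > 0" and p: "p \<ge> 0" and q: "q \<ge> 0" and r: "r \<ge> 0"
    and h: "sb1 * nx \<le> sa2 * M * ss * st * nx + sb2 / sa1 * p + q"
    and rdef: "sb2 = r * sb1"
    and mM: "1 \<le> rm * MAA"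
  shows "((1 - (sa2 / sb1) * M * ss * st) / max (1 / sb1) ((1 + r) / sa1 * rm * MAA)) * nx \<le> p + q"
proof -
  define N where "N = 1 - (sa2 / sb1) * M * ss * st"
  define D where "D = max (1 / sb1) ((1 + r) / sa1 * rm * MAA)"
  have D0: "D > 0" unfolding D_def using sb1 by (simp add: less_max_iff_disj)
  have "sb1 * (N * nx) = sb1 * nx - sa2 * M * ss * st * nx"
    unfolding N_def using sb1 by (simp add: field_simps)
  also have "\<dots> \<le> sb2 / sa1 * p + q" using h by linarith
  also have "\<dots> = sb1 * (r / sa1 * p + q / sb1)" unfolding rdef using sb1 by (simp add: field_simps)
  finally have "N * nx \<le> r / sa1 * p + q / sb1" using sb1 by simp
  also have "\<dots> \<le> D * p + D * q"
  proof (rule add_mono)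
    have "r / sa1 \<le> (1 + r) / sa1" using sa1 by (simp add: divide_right_mono)
    also have "\<dots> = (1 + r) / sa1 * 1" by simp
    also have "\<dots> \<le> (1 + r) / sa1 * (rm * MAA)" using mM sa1 r by (intro mult_left_mono) simp_all
    also have "\<dots> \<le> D" unfolding D_def by (simp add: mult.assoc)
    finally show "r / sa1 * p \<le> D * p" using p by (rule mult_right_mono)
    have "1 / sb1 \<le> D" unfolding D_def by simp
    then have "1 / sb1 * q \<le> D * q" using q by (rule mult_right_mono)
    then show "q / sb1 \<le> D * q" by simp
  qed
  finally have "N * nx \<le> D * (p + q)" by (simp add: distrib_left)
  then have "N * nx / D \<le> p + q" using D0 by (simp add: divide_le_eq mult.commute)
  then show ?thesis unfolding N_def[symmetric] D_def[symmetric] by simp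
qed



theorem mainTheorem5:
  fixes a b :: "nat \<Rightarrow> complex ^ 'n"
    and m n :: nat
    and \<alpha>1 \<alpha>2 \<beta>1 \<beta>2 :: real
    and S T :: "nat set"
  assumes frameA: "is_frame a m \<alpha>1 \<alpha>2"
    and frameB: "is_frame b n \<beta>1 \<beta>2"
    and S_sub: "S \<subseteq> {1..m}"
    and T_sub: "T \<subseteq> {1..n}"
    and cond: "real (card S) * real (card T) * (coherence (dual_frame a m) m b n)\<^sup>2 < \<beta>1 / \<alpha>2"
  shows "\<forall>x :: complex ^ 'n.
    ((1 - sqrt (\<alpha>2 / \<beta>1) * coherence (dual_frame a m) m b n * sqrt (real (card S)) * sqrt (real (card T)))
      / max (1 / sqrt \<beta>1)
            ((1 + sqrt (\<beta>2 / \<beta>1)) / sqrt \<alpha>1 * real m * coherence (dual_frame a m) m a m)) * norm x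
    \<le> sqrt (\<Sum>k\<in>{1..m} - S. (cmod (cinner x (a k)))\<^sup>2)
       + sqrt (\<Sum>j\<in>{1..n} - T. (cmod (cinner x (b j)))\<^sup>2)"
  proof
  fix x :: "complex ^ 'n"
  have a1: "\<alpha>1 > 0" using frameA unfolding is_frame_def by auto
  have b1: "\<beta>1 > 0" and b2: "\<beta>2 \<ge> 0" using frameB unfolding is_frame_def by auto
  have h: "sqrt \<beta>1 * norm x \<le> sqrt \<alpha>2 * coherence (dual_frame a m) m b n * sqrt (real (card S)) * sqrt (real (card T)) * norm x
     + sqrt \<beta>2 / sqrt \<alpha>1 * sqrt (\<Sum>k\<in>{1..m} - S. (cmod (cinner x (a k)))\<^sup>2)
     + sqrt (\<Sum>j\<in>{1..n} - T. (cmod (cinner x (b j)))\<^sup>2)"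
    by (rule key[OF frameA frameB S_sub T_sub])
  have rdef: "sqrt \<beta>2 = sqrt (\<beta>2 / \<beta>1) * sqrt \<beta>1"
    using b1 by (simp add: real_sqrt_divide)
  have e1: "sqrt (\<alpha>2 / \<beta>1) = sqrt \<alpha>2 / sqrt \<beta>1" by (simp add: real_sqrt_divide)
  show "((1 - sqrt (\<alpha>2 / \<beta>1) * coherence (dual_frame a m) m b n * sqrt (real (card S)) * sqrt (real (card T)))
      / max (1 / sqrt \<beta>1)
            ((1 + sqrt (\<beta>2 / \<beta>1)) / sqrt \<alpha>1 * real m * coherence (dual_frame a m) m a m)) * norm x
    \<le> sqrt (\<Sum>k\<in>{1..m} - S. (cmod (cinner x (a k)))\<^sup>2)
       + sqrt (\<Sum>j\<in>{1..n} - T. (cmod (cinner x (b j)))\<^sup>2)"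
    unfolding e1
    by (rule final_real[OF _ _ _ _ _ h rdef trace_bound[OF frameA]]) (use a1 b1 b2 in \<open>auto simp: sum_nonneg\<close>)
qed

end
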